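(* Let $k\geq 2$ be an integer, let $\mathcal{F}$ be a linear $k$-uniform family with maximum degree $\Delta=\Delta(\mathcal{F})$ and maximum matching size $\nu=\nu(\mathcal{F})$, and let $\mathcal{M}$ be a maximum matching of $\mathcal{F}$. Then $|D_1(\mathcal{F},\mathcal{M})|\leq\max\{(\Delta-1)\nu,\;k(k-1)\nu\}$.
   Context: A family is a finite collection of distinct subsets of a vertex set; it is $k$-uniform if every member has exactly $k$ elements and linear if any two distinct members share at most one vertex. A matching is a collection of pairwise disjoint members; $\nu(\mathcal{F})$ is the maximum size of a matching, and a maximum matching is one of that size. $\Delta(\mathcal{F})=\max_x|\{A\in\mathcal{F}:x\in A\}|$. $X_{\mathcal{M}}=\bigcup_{A\in\mathcal{M}}A$ and $D_1(\mathcal{F},\mathcal{M})=\{A\in\mathcal{F}:|A\cap X_{\mathcal{M}}|=1\}$. *)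

theory Defs
  imports Main
begin

definition uniform :: "nat \<Rightarrow> 'a set set \<Rightarrow> bool" where
  "uniform k F \<longleftrightarrow> (\<forall>A\<in>F. finite A \<and> card A = k)"

definition linear_family :: "'a set set \<Rightarrow> bool" where
  "linear_family F \<longleftrightarrow> (\<forall>A\<in>F. \<forall>B\<in>F. A \<noteq> B \<longrightarrow> card (A \<inter> B) \<le> 1)"

definition matching :: "'a set set \<Rightarrow> 'a set set \<Rightarrow> bool" where
  "matching F M \<longleftrightarrow> M \<subseteq> F \<and> (\<forall>A\<in>M. \<forall>B\<in>M. A \<noteq> B \<longrightarrow> A \<inter> B = {})"

definition nu :: "'a set set \<Rightarrow> nat" where
  "nu F = Max (card ` {M. matching F M})"

definition max_matching :: "'a set set \<Rightarrow> 'a set set \<Rightarrow> bool" where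
  "max_matching F M \<longleftrightarrow> matching F M \<and> card M = nu F"

definition degree :: "'a set set \<Rightarrow> 'a \<Rightarrow> nat" where
  "degree F x = card {A\<in>F. x \<in> A}"

definition max_degree :: "'a set set \<Rightarrow> nat" where
  "max_degree F = Max (insert 0 (degree F ` (\<Union>F)))"

definition D1 :: "'a set set \<Rightarrow> 'a set set \<Rightarrow> 'a set set" where
  "D1 F M = {A\<in>F. card (A \<inter> \<Union>M) = 1}"

end

theory Submission
  imports Defs
begin

lemma nu_ge:
  assumes "finite F" "matching F M'"
  shows "card M' \<le> nu F"
proof -
  have "{M. matching F M} \<subseteq> Pow F" by (auto simp: matching_def)
  hence "finite {M. matching F M}" using assms(1) by (meson finite_Pow_iff finite_subset)
  thus ?thesis unfolding nu_def using assms(2) by (intro Max_ge) auto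
qed

lemma aug:
  assumes "finite F" "uniform k F" "k \<ge> 2" "max_matching F M"
    and "B \<in> M" "z \<in> B" "w \<in> B" "z \<noteq> w"
    and "A \<in> F" "A \<inter> \<Union>M = {z}" "A' \<in> F" "A' \<inter> \<Union>M = {w}"
  shows "A \<inter> A' \<noteq> {}"
proof
  assume dis: "A \<inter> A' = {}"
  have mF: "M \<subseteq> F" and mD: "\<forall>C\<in>M. \<forall>D\<in>M. C \<noteq> D \<longrightarrow> C \<inter> D = {}"
    and cM: "card M = nu F"
    using assms(4) by (auto simp: max_matching_def matching_def)
  have finM: "finite M" using mF assms(1) finite_subset by blast
  have notM: "X \<notin> M" if "X \<in> F" "card (X \<inter> \<Union>M) = 1" for X
  proof
    assume "X \<in> M"
    hence "X \<inter> \<Union>M = X" by auto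
    moreover have "card X = k" using assms(2) that(1) by (auto simp: uniform_def)
    ultimately show False using that(2) assms(3) by simp
  qed
  have AM: "A \<notin> M" using notM[OF assms(9)] assms(10) by simp
  have AM': "A' \<notin> M" using notM[OF assms(11)] assms(12) by simp
  have AA: "A \<noteq> A'" using dis assms(10) by auto
  have dC: "A \<inter> C = {}" if "C \<in> M" "C \<noteq> B" for C
  proof -
    have "z \<notin> C" using mD that assms(5,6) by blast
    show ?thesis proof (rule ccontr)
      assume "A \<inter> C \<noteq> {}"
      then obtain u where "u \<in> A" "u \<in> C" by blast
      hence "u \<in> A \<inter> \<Union>M" using that(1) by blast
      hence "u = z" using assms(10) by simp
      thus False using \<open>z \<notin> C\<close> \<open>u \<in> C\<close> by simp
    qed
  qed
  have dC': "A' \<inter> C = {}" if "C \<in> M" "C \<noteq> B" for C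
  proof -
    have "w \<notin> C" using mD that assms(5,7) by blast
    show ?thesis proof (rule ccontr)
      assume "A' \<inter> C \<noteq> {}"
      then obtain u where "u \<in> A'" "u \<in> C" by blast
      hence "u \<in> A' \<inter> \<Union>M" using that(1) by blast
      hence "u = w" using assms(12) by simp
      thus False using \<open>w \<notin> C\<close> \<open>u \<in> C\<close> by simp
    qed
  qed
  define M' where "M' = insert A (insert A' (M - {B}))"
  have "M' \<subseteq> F" unfolding M'_def using mF assms(9,11) by blast
  moreover have "\<forall>C\<in>M'. \<forall>D\<in>M'. C \<noteq> D \<longrightarrow> C \<inter> D = {}"
  proof (intro ballI impI)
    fix C D assume C: "C \<in> M'" and D: "D \<in> M'" and CD: "C \<noteq> D"
    have s1: "C \<inter> A = {}" if "C \<in> M" "C \<noteq> B" for C using dC[OF that] by blast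
    have s2: "C \<inter> A' = {}" if "C \<in> M" "C \<noteq> B" for C using dC'[OF that] by blast
    have dis2: "A' \<inter> A = {}" using dis by blast
    have cC: "C = A \<or> C = A' \<or> (C \<in> M \<and> C \<noteq> B)" using C unfolding M'_def by blast
    have cD: "D = A \<or> D = A' \<or> (D \<in> M \<and> D \<noteq> B)" using D unfolding M'_def by blast
    show "C \<inter> D = {}"
    proof (cases "C \<in> M \<and> C \<noteq> B")
      case True
      then show ?thesis
      proof (cases "D \<in> M \<and> D \<noteq> B")
        case True
        then show ?thesis using \<open>C \<in> M \<and> C \<noteq> B\<close> mD CD by blast
      next
        case False
        then have "D = A \<or> D = A'" using cD by blast
        then show ?thesis using s1 s2 True by blast
      qed
    next
      case False
      then have cA: "C = A \<or> C = A'" using cC by blast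
      show ?thesis
      proof (cases "D \<in> M \<and> D \<noteq> B")
        case True
        then show ?thesis using cA dC dC' by blast
      next
        case False
        then have "D = A \<or> D = A'" using cD by blast
        then show ?thesis using cA CD dis dis2 by blast
      qed
    qed
  qed
  ultimately have "matching F M'" unfolding matching_def by blast
  hence "card M' \<le> nu F" using nu_ge assms(1) by blast
  moreover have "card M' = card M + 1"
  proof -
    have "0 < card M" using finM assms(5) card_gt_0_iff by blast
    moreover have "card (M - {B}) = card M - 1" using finM assms(5) by simp
    moreover have "card M' = Suc (Suc (card (M - {B})))"
      unfolding M'_def using finM AM AM' AA by simp
    ultimately show ?thesis by simp
  qed
  ultimately show False using cM by simp
qed

lemma classbound:
  assumes "finite F" "uniform k F" "k \<ge> 2" "max_matching F M" "linear_family F"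
    and "B \<in> M" "z \<in> B" "w \<in> B" "z \<noteq> w"
    and "A' \<in> F" "A' \<inter> \<Union>M = {w}"
  shows "card {A\<in>F. A \<inter> \<Union>M = {z}} \<le> k - 1"
proof -
  let ?C = "{A\<in>F. A \<inter> \<Union>M = {z}}"
  define f where "f A = (SOME t. t \<in> A \<inter> A')" for A
  have ft: "f A \<in> A \<inter> A'" if "A \<in> ?C" for A
  proof -
    have "A \<inter> A' \<noteq> {}" using aug[OF assms(1-4,6-9) _ _ assms(10,11)] that by blast
    thus ?thesis unfolding f_def by (meson ex_in_conv someI_ex)
  qed
  have fw: "f A \<in> A' - {w}" if "A \<in> ?C" for A
  proof -
    have "w \<in> \<Union>M" using assms(6,8) by blast
    hence "w \<notin> A" using that assms(9) by auto
    thus ?thesis using ft[OF that] by blast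
  qed
  have inj: "inj_on f ?C"
  proof
    fix A1 A2 assume a1: "A1 \<in> ?C" and a2: "A2 \<in> ?C" and eq: "f A1 = f A2"
    let ?t = "f A1"
    have t1: "?t \<in> A1" "?t \<in> A2" "?t \<in> A'" using ft[OF a1] ft[OF a2] eq by auto
    have "?t \<noteq> w" using fw[OF a1] by simp
    hence "?t \<notin> \<Union>M" using t1(3) assms(11) by blast
    moreover have "z \<in> \<Union>M" using assms(6,7) by blast
    ultimately have ne: "?t \<noteq> z" by blast
    have "{z, ?t} \<subseteq> A1 \<inter> A2" using a1 a2 t1 by auto
    moreover have "finite A1" using a1 assms(2) by (auto simp: uniform_def)
    ultimately have "card {z, ?t} \<le> card (A1 \<inter> A2)" by (intro card_mono) auto
    moreover have "card {z, ?t} = 2" using ne by simp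
    ultimately have c2: "card (A1 \<inter> A2) \<ge> 2" by simp
    show "A1 = A2"
    proof (rule ccontr)
      assume "A1 \<noteq> A2"
      moreover have "A1 \<in> F" "A2 \<in> F" using a1 a2 by auto
      ultimately have "card (A1 \<inter> A2) \<le> 1" using assms(5) unfolding linear_family_def by blast
      thus False using c2 by simp
    qed
  qed
  have "card ?C \<le> card (A' - {w})"
    apply (rule card_inj_on_le[OF inj])
    using fw apply blast
    using assms(2,10) by (auto simp: uniform_def)
  also have "\<dots> = k - 1"
  proof -
    have "w \<in> A'" using assms(11) by blast
    moreover have "finite A'" "card A' = k" using assms(2,10) by (auto simp: uniform_def)
    ultimately show ?thesis by simp
  qed
  finally show ?thesis .
qed

lemma degbound:
  assumes "finite F" "uniform k F" "k \<ge> 2" "max_matching F M"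
    and "B \<in> M" "z \<in> B"
  shows "card {A\<in>F. A \<inter> \<Union>M = {z}} \<le> max_degree F - 1"
proof -
  let ?C = "{A\<in>F. A \<inter> \<Union>M = {z}}"
  have BF: "B \<in> F" using assms(4,5) by (auto simp: max_matching_def matching_def)
  have "B \<inter> \<Union>M = B" using assms(5) by auto
  moreover have "card B = k" using BF assms(2) by (auto simp: uniform_def)
  ultimately have "B \<notin> ?C" using assms(3) by auto
  moreover have "insert B ?C \<subseteq> {A\<in>F. z \<in> A}" using BF assms(6) by auto
  moreover have "finite ?C" using assms(1) by simp
  moreover have "finite {A\<in>F. z \<in> A}" using assms(1) by simp
  ultimately have "card (insert B ?C) \<le> card {A\<in>F. z \<in> A}"
    and "card (insert B ?C) = card ?C + 1"
    by (metis card_mono, simp add: card_insert_disjoint)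
  hence "card ?C + 1 \<le> degree F z" unfolding degree_def by simp
  moreover have "degree F z \<le> max_degree F"
  proof -
    have "finite (\<Union>F)" using assms(1,2) by (auto simp: uniform_def)
    thus ?thesis unfolding max_degree_def using BF assms(6) by (intro Max_ge) auto
  qed
  ultimately show ?thesis by simp
qed

theorem lemma3:
  fixes F M :: "'a set set" and k :: nat
  assumes "k \<ge> 2"
    and "finite F"
    and "uniform k F"
    and "linear_family F"
    and "max_matching F M"
  shows "card (D1 F M) \<le> max ((max_degree F - 1) * nu F) (k * (k - 1) * nu F)"
proof -
  let ?c = "max (max_degree F - 1) (k * (k - 1))"
  define C where "C z = {A\<in>F. A \<inter> \<Union>M = {z}}" for z
  have mF: "M \<subseteq> F" and cM: "card M = nu F"
    using assms(5) by (auto simp: max_matching_def matching_def)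
  have finM: "finite M" using mF assms(2) finite_subset by blast
  have finB: "finite B" "card B = k" if "B \<in> M" for B
    using that mF assms(3) by (auto simp: uniform_def)
  have finC: "finite (C z)" for z using assms(2) by (simp add: C_def)
  have D1sub: "D1 F M \<subseteq> (\<Union>B\<in>M. \<Union>z\<in>B. C z)"
  proof
    fix A assume "A \<in> D1 F M"
    hence AF: "A \<in> F" and "card (A \<inter> \<Union>M) = 1" by (auto simp: D1_def)
    then obtain z where z: "A \<inter> \<Union>M = {z}" by (meson card_1_singletonE)
    then obtain B where "B \<in> M" "z \<in> B" by blast
    thus "A \<in> (\<Union>B\<in>M. \<Union>z\<in>B. C z)" using AF z by (auto simp: C_def)
  qed
  have perB: "card (\<Union>z\<in>B. C z) \<le> ?c" if B: "B \<in> M" for B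
  proof (cases "\<exists>x\<in>B. \<forall>y\<in>B. y \<noteq> x \<longrightarrow> C y = {}")
    case True
    then obtain x where x: "x \<in> B" "\<forall>y\<in>B. y \<noteq> x \<longrightarrow> C y = {}" by blast
    hence "(\<Union>z\<in>B. C z) \<subseteq> C x" by auto
    hence "card (\<Union>z\<in>B. C z) \<le> card (C x)" using finC by (meson card_mono)
    also have "\<dots> \<le> max_degree F - 1"
      unfolding C_def using degbound[OF assms(2,3,1,5) B x(1)] .
    finally show ?thesis by simp
  next
    case False
    have each: "card (C z) \<le> k - 1" if z: "z \<in> B" for z
    proof -
      obtain y where y: "y \<in> B" "y \<noteq> z" "C y \<noteq> {}" using False z by blast
      then obtain A' where "A' \<in> C y" by blast
      hence a1: "A' \<in> F" and a2: "A' \<inter> \<Union>M = {y}" by (auto simp: C_def)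
      have "y \<noteq> z \<Longrightarrow> z \<noteq> y" by blast
      hence zy: "z \<noteq> y" using y(2) by blast
      show ?thesis unfolding C_def
        by (rule classbound[OF assms(2,3,1,5,4) B z y(1) zy a1 a2])
    qed
    have "card (\<Union>z\<in>B. C z) \<le> (\<Sum>z\<in>B. card (C z))"
      using finB[OF B] by (intro card_UN_le)
    also have "\<dots> \<le> (\<Sum>z\<in>B. k - 1)" using each by (meson sum_mono)
    also have "\<dots> = k * (k - 1)" using finB[OF B] by simp
    finally show ?thesis by simp
  qed
  have "card (D1 F M) \<le> card (\<Union>B\<in>M. \<Union>z\<in>B. C z)"
    using D1sub finM finB finC by (intro card_mono) auto
  also have "\<dots> \<le> (\<Sum>B\<in>M. card (\<Union>z\<in>B. C z))" using finM by (rule card_UN_le)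
  also have "\<dots> \<le> (\<Sum>B\<in>M. ?c)" using perB by (meson sum_mono)
  also have "\<dots> = ?c * nu F" using cM by simp
  also have "\<dots> = max ((max_degree F - 1) * nu F) (k * (k - 1) * nu F)"
    by (simp add: nat_mult_max_left)
  finally show ?thesis .
qed

end
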